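(* Let $G=D_n\times\mathbb Z/2$, $H=D_n\times\{0\}$, and let $c_3\le c_4$ be integers with $c_3\ge2$, $c_4>2$. Suppose $f:T(2,2,c_3,c_4)\to G$ is admissible for cover type III-b, i.e. $f$ is surjective, $f(\gamma_1),f(\gamma_2)$ have order 2, $f(\gamma_3)$ has order $c_3$, $f(\gamma_4)$ has order $c_4$, the second components of $f(\gamma_1),f(\gamma_2)$ are $1$ and those of $f(\gamma_3),f(\gamma_4)$ are $0$. Then $c_3=2$ and $c_4=n$, and up to equivalence there is a unique admissible $f$, given by the Hurwitz vector $((yx,1),(e,1),(y,0),(x,0))$.
   Context: $D_n=\langle x,y\mid x^n=y^2=1,\ yxy^{-1}=x^{-1}\rangle$ with neutral element $e$; $\mathbb Z/2$ is written additively with generator $1$. $T(m_1,\dots,m_r):=\langle\gamma_1,\dots,\gamma_r\mid \gamma_1\cdots\gamma_r=1,\ \gamma_i^{m_i}=1\rangle$. The Hurwitz vector of $f$ is $(f(\gamma_1),\dots,f(\gamma_r))$. The braid group $\mathcal B_r$ acts on Hurwitz vectors by $\sigma_i:(\dots,v_i,v_{i+1},\dots)\mapsto(\dots,v_iv_{i+1}v_i^{-1},v_i,\dots)$, and $\mathrm{Aut}(G)_H$ (automorphisms of $G$ preserving $H$) acts componentwise. Two admissible $f,f'$ are equivalent if their Hurwitz vectors lie in the same $\mathcal B_r\times\mathrm{Aut}(G)_H$-orbit. *)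

theory Defs
  imports "HOL-Algebra.Multiplicative_Group" "HOL-Algebra.Generated_Groups"
begin

text \<open>The element (a, s) with 0 <= a < n stands for x^a y^s (s = True means y^1).
  Multiplication: x^a y^s . x^b y^t = x^(a + (-1)^s b) y^(s+t), which is the group
  presented by x^n = y^2 = 1, y x y^-1 = x^-1.\<close>

definition dih_mult :: "nat \<Rightarrow> int \<times> bool \<Rightarrow> int \<times> bool \<Rightarrow> int \<times> bool" where
  "dih_mult n p q = ((fst p + (if snd p then - fst q else fst q)) mod int n, snd p \<noteq> snd q)"

definition Dih :: "nat \<Rightarrow> (int \<times> bool) monoid" where
  "Dih n = \<lparr> carrier = {0..<int n} \<times> (UNIV :: bool set), mult = dih_mult n, one = (0, False) \<rparr>"

definition dih_x :: "nat \<Rightarrow> int \<times> bool" where "dih_x n = (1 mod int n, False)"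
definition dih_y :: "int \<times> bool" where "dih_y = (0, True)"
definition dih_e :: "int \<times> bool" where "dih_e = (0, False)"

text \<open>Z/2 written additively: False = 0, True = 1 (the generator), addition = xor.\<close>
definition Z2 :: "bool monoid" where
  "Z2 = \<lparr> carrier = UNIV, mult = (\<lambda>a b. a \<noteq> b), one = False \<rparr>"

definition GG :: "nat \<Rightarrow> ((int \<times> bool) \<times> bool) monoid" where
  "GG n = Dih n \<times>\<times> Z2"

definition HH :: "nat \<Rightarrow> ((int \<times> bool) \<times> bool) set" where
  "HH n = carrier (Dih n) \<times> {False}"

text \<open>Braid generator sigma_i (0-based index i, acting on positions i, i+1) and its inverse.\<close>
definition braid_sigma :: "('a, 'b) monoid_scheme \<Rightarrow> nat \<Rightarrow> 'a list \<Rightarrow> 'a list" where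
  "braid_sigma G i v =
     v[i := v ! i \<otimes>\<^bsub>G\<^esub> v ! Suc i \<otimes>\<^bsub>G\<^esub> inv\<^bsub>G\<^esub> (v ! i), Suc i := v ! i]"

definition braid_sigma_inv :: "('a, 'b) monoid_scheme \<Rightarrow> nat \<Rightarrow> 'a list \<Rightarrow> 'a list" where
  "braid_sigma_inv G i v =
     v[i := v ! Suc i, Suc i := inv\<^bsub>G\<^esub> (v ! Suc i) \<otimes>\<^bsub>G\<^esub> v ! i \<otimes>\<^bsub>G\<^esub> v ! Suc i]"

definition Aut_pres :: "('a, 'b) monoid_scheme \<Rightarrow> 'a set \<Rightarrow> ('a \<Rightarrow> 'a) set" where
  "Aut_pres G H = {\<phi>. \<phi> \<in> iso G G \<and> \<phi> ` H = H}"

inductive hmove :: "('a, 'b) monoid_scheme \<Rightarrow> 'a set \<Rightarrow> 'a list \<Rightarrow> 'a list \<Rightarrow> bool"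
  for G H where
  sigma: "Suc i < length v \<Longrightarrow> hmove G H v (braid_sigma G i v)"
| sigma_inv: "Suc i < length v \<Longrightarrow> hmove G H v (braid_sigma_inv G i v)"
| aut: "\<phi> \<in> Aut_pres G H \<Longrightarrow> hmove G H v (map \<phi> v)"

definition hurwitz_equiv :: "('a, 'b) monoid_scheme \<Rightarrow> 'a set \<Rightarrow> 'a list \<Rightarrow> 'a list \<Rightarrow> bool" where
  "hurwitz_equiv G H v w = (hmove G H)\<^sup>*\<^sup>* v w"

text \<open>A homomorphism f : T(2,2,c3,c4) -> G is determined by its Hurwitz vector
  v = (f(gamma_1),...,f(gamma_4)); the tuples arising are exactly those with entries in G,
  v1 v2 v3 v4 = 1 and v_i^(m_i) = 1. Admissible for III-b: f surjective, orders exactly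
  2,2,c3,c4, Z/2-components 1,1,0,0.\<close>
definition admissible_IIIb :: "nat \<Rightarrow> nat \<Rightarrow> nat \<Rightarrow> ((int \<times> bool) \<times> bool) list \<Rightarrow> bool" where
  "admissible_IIIb n c3 c4 v \<longleftrightarrow>
     length v = 4 \<and> set v \<subseteq> carrier (GG n) \<and>
     v ! 0 \<otimes>\<^bsub>GG n\<^esub> v ! 1 \<otimes>\<^bsub>GG n\<^esub> v ! 2 \<otimes>\<^bsub>GG n\<^esub> v ! 3 = \<one>\<^bsub>GG n\<^esub> \<and>
     generate (GG n) (set v) = carrier (GG n) \<and>
     group.ord (GG n) (v ! 0) = 2 \<and> group.ord (GG n) (v ! 1) = 2 \<and>
     group.ord (GG n) (v ! 2) = c3 \<and> group.ord (GG n) (v ! 3) = c4 \<and>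
     snd (v ! 0) = True \<and> snd (v ! 1) = True \<and> snd (v ! 2) = False \<and> snd (v ! 3) = False"

end

theory Submission
  imports Defs
begin


lemma dvd_combo_mult:
  fixes m i i' j t :: int
  assumes A: "m dvd (i - (if r then j else 0) - (if s then t else 0))"
    and B: "m dvd (i' - (if r' then j else 0) - (if s' then t else 0))"
    and T: "m dvd 2 * t"
  shows "m dvd (i + (if r then - i' else i') - (if r \<noteq> r' then j else 0) - (if s \<noteq> s' then t else 0))"
proof -
  define a where "a = i - (if r then j else 0) - (if s then t else 0)"
  define b where "b = i' - (if r' then j else 0) - (if s' then t else 0)"
  define X where "X = (i + (if r then - i' else i') - (if r \<noteq> r' then j else 0) - (if s \<noteq> s' then t else 0))"
  define c where "c = (if r then - b else b)"
  define e where "e = X - a - c"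
  have "e = 0 \<or> e = 2 * t \<or> e = - (2 * t)" unfolding e_def a_def b_def X_def c_def
    by (cases r; cases r'; cases s; cases s') auto
  then have "m dvd e" using T by auto
  moreover have "m dvd a" "m dvd b" using A B a_def b_def by auto
  moreover have "m dvd c" using \<open>m dvd b\<close> unfolding c_def by auto
  ultimately have "m dvd a + c + e" by auto
  moreover have "a + c + e = X" unfolding e_def by simp
  ultimately show ?thesis unfolding X_def by simp
qed

lemma dvd_combo_inv:
  fixes m i j t :: int
  assumes A: "m dvd (i - (if s then t else 0))" and T: "m dvd 2 * t"
  shows "m dvd (- i - (if s then t else 0))"
proof -
  have "- i - (if s then t else 0) = - (i - (if s then t else 0)) - (if s then 2 * t else 0)" by auto
  then show ?thesis using A T by (metis dvd_diff dvd_minus_iff dvd_0_right)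
qed


lemma mod_helper: "(u * (a mod n) + b + c) mod n = (u * a + b + c) mod (n::int)"
  by (rule mod_add_cong[OF mod_add_cong[OF mod_mult_right_eq refl] refl])

lemma phi_mod:
  fixes n u M z i i' :: int
  assumes z: "n dvd 2 * z"
  shows "(u * ((i + (if r then - i' else i')) mod n) + (if r \<noteq> r' then M else 0) + (if s \<noteq> s' then z else 0)) mod n
    = ((u * i + (if r then M else 0) + (if s then z else 0)) mod n
       + (if r then - ((u * i' + (if r' then M else 0) + (if s' then z else 0)) mod n)
          else (u * i' + (if r' then M else 0) + (if s' then z else 0)) mod n)) mod n"
proof -
  define A where "A = u * i + (if r then M else 0) + (if s then z else 0)"
  define B where "B = u * i' + (if r' then M else 0) + (if s' then z else 0)"
  define X where "X = u * (i + (if r then - i' else i')) + (if r \<noteq> r' then M else 0) + (if s \<noteq> s' then z else 0)"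
  define C where "C = (if r then - B else B)"
  have L: "(u * ((i + (if r then - i' else i')) mod n) + (if r \<noteq> r' then M else 0) + (if s \<noteq> s' then z else 0)) mod n = X mod n"
    unfolding X_def by (rule mod_helper)
  have R: "(A mod n + (if r then - (B mod n) else B mod n)) mod n = (A + C) mod n"
    unfolding C_def by (cases r) (simp_all add: mod_simps)
  have D: "X - (A + C) = (if r then (if \<not> s \<and> s' then 2 * z else 0) else (if s \<and> s' then - (2 * z) else 0))"
    unfolding X_def A_def B_def C_def by (cases r; cases r'; cases s; cases s'; simp add: algebra_simps)
  then have "n dvd (X - (A + C))" using z by simp
  then have "X mod n = (A + C) mod n" by (simp add: mod_eq_dvd_iff)
  note eq = this
  show ?thesis unfolding A_def[symmetric] B_def[symmetric] by (simp only: L R eq)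
qed


lemma Dih_carrier: "carrier (Dih n) = {0..<int n} \<times> UNIV" by (simp add: Dih_def)
lemma Dih_mult: "x \<otimes>\<^bsub>Dih n\<^esub> y = dih_mult n x y" by (simp add: Dih_def)
lemma Dih_one: "\<one>\<^bsub>Dih n\<^esub> = (0, False)" by (simp add: Dih_def)

lemma Dih_group: assumes "n \<ge> 1" shows "group (Dih n)"
proof (rule groupI)
  fix x y assume "x \<in> carrier (Dih n)" "y \<in> carrier (Dih n)"
  then show "x \<otimes>\<^bsub>Dih n\<^esub> y \<in> carrier (Dih n)" using assms
    by (auto simp: Dih_def dih_mult_def)
next
  show "\<one>\<^bsub>Dih n\<^esub> \<in> carrier (Dih n)" using assms by (auto simp: Dih_def)
next
  fix x y z assume "x \<in> carrier (Dih n)" "y \<in> carrier (Dih n)" "z \<in> carrier (Dih n)"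
  show "x \<otimes>\<^bsub>Dih n\<^esub> y \<otimes>\<^bsub>Dih n\<^esub> z = x \<otimes>\<^bsub>Dih n\<^esub> (y \<otimes>\<^bsub>Dih n\<^esub> z)"
    by (cases x; cases y; cases z) (auto simp: Dih_def dih_mult_def mod_simps algebra_simps)
next
  fix x assume "x \<in> carrier (Dih n)"
  then show "\<one>\<^bsub>Dih n\<^esub> \<otimes>\<^bsub>Dih n\<^esub> x = x"
    by (cases x) (auto simp: Dih_def dih_mult_def)
next
  fix x assume x: "x \<in> carrier (Dih n)"
  obtain a b where xe: "x = (a, b)" by (cases x)
  show "\<exists>y\<in>carrier (Dih n). y \<otimes>\<^bsub>Dih n\<^esub> x = \<one>\<^bsub>Dih n\<^esub>"
  proof (cases b)
    case True
    then show ?thesis using x xe by (intro bexI[of _ x]) (auto simp: Dih_def dih_mult_def)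
  next
    case False
    then show ?thesis using x xe assms
      by (intro bexI[of _ "((- a) mod int n, False)"]) (auto simp: Dih_def dih_mult_def mod_simps)
  qed
qed

lemma Z2_group: "group Z2"
  unfolding Z2_def by (rule groupI) auto

lemma GG_group: "n \<ge> 1 \<Longrightarrow> group (GG n)"
  unfolding GG_def by (intro DirProd_group Dih_group Z2_group)

lemma GG_carrier: "carrier (GG n) = ({0..<int n} \<times> UNIV) \<times> UNIV"
  by (simp add: GG_def Dih_carrier Z2_def)

lemma GG_mult: "x \<otimes>\<^bsub>GG n\<^esub> y = (dih_mult n (fst x) (fst y), snd x \<noteq> snd y)"
  by (simp add: GG_def mult_DirProd' Dih_mult Z2_def)

lemma GG_one: "\<one>\<^bsub>GG n\<^esub> = ((0, False), False)"
  by (simp add: GG_def Dih_one Z2_def)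


lemma GG_inv: assumes "n \<ge> 1" "((i, r), s) \<in> carrier (GG n)"
  shows "inv\<^bsub>GG n\<^esub> ((i, r), s) = ((if r then i else (- i) mod int n, r), s)"
proof -
  interpret group "GG n" using GG_group assms(1) .
  show ?thesis
    using assms by (intro inv_equality) (auto simp: GG_carrier GG_mult GG_one dih_mult_def mod_simps)
qed

lemma GG_pow_rot: assumes "n \<ge> 1" "0 \<le> k" "k < int n"
  shows "((k, False), False) [^]\<^bsub>GG n\<^esub> (m::nat) = (((k * int m) mod int n, False), False)"
proof (induction m)
  case 0
  then show ?case by (simp add: GG_one)
next
  case (Suc m)
  then show ?case by (simp add: GG_mult dih_mult_def mod_simps algebra_simps)
qed

lemma GG_refl_sq: "((i, True), s) \<otimes>\<^bsub>GG n\<^esub> ((i, True), s) = \<one>\<^bsub>GG n\<^esub>"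
  by (simp add: GG_mult GG_one dih_mult_def)

lemma GG_ord_dvd2: assumes "n \<ge> 1" "x \<in> carrier (GG n)" "x \<otimes>\<^bsub>GG n\<^esub> x = \<one>\<^bsub>GG n\<^esub>"
  shows "group.ord (GG n) x dvd 2"
proof -
  interpret group "GG n" using GG_group assms(1) .
  have "x [^]\<^bsub>GG n\<^esub> (2::nat) = \<one>\<^bsub>GG n\<^esub>" using assms
    by (simp add: numeral_2_eq_2)
  then show ?thesis using pow_eq_id assms(2) by blast
qed

lemma GG_ord2_sq: assumes "n \<ge> 1" "x \<in> carrier (GG n)" "group.ord (GG n) x = 2"
  shows "x \<otimes>\<^bsub>GG n\<^esub> x = \<one>\<^bsub>GG n\<^esub>"
proof -
  interpret group "GG n" using GG_group assms(1) .
  have "x [^]\<^bsub>GG n\<^esub> (2::nat) = \<one>\<^bsub>GG n\<^esub>" using assms pow_ord_eq_1 by metis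
  then show ?thesis using assms by (simp add: numeral_2_eq_2)
qed

lemma GG_ord2_iff: assumes "n \<ge> 1" "x \<in> carrier (GG n)" "x \<noteq> \<one>\<^bsub>GG n\<^esub>"
   "x \<otimes>\<^bsub>GG n\<^esub> x = \<one>\<^bsub>GG n\<^esub>"
  shows "group.ord (GG n) x = 2"
proof -
  interpret group "GG n" using GG_group assms(1) .
  have "ord x dvd 2" using GG_ord_dvd2 assms by blast
  moreover have "ord x \<noteq> 1" using ord_eq_1 assms by blast
  moreover have "d dvd (2::nat) \<Longrightarrow> d \<noteq> 1 \<Longrightarrow> d = 2" for d
  proof -
    assume "d dvd (2::nat)" "d \<noteq> 1"
    moreover have "d \<le> 2" "d \<noteq> 0" using \<open>d dvd 2\<close> by (metis dvd_imp_le zero_less_numeral, metis dvd_0_left_iff zero_neq_numeral)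
    ultimately show "d = 2" by (cases d; cases "d - 1") auto
  qed
  ultimately show ?thesis by blast
qed

lemma GG_ord_rot: assumes "n \<ge> 1" "0 \<le> k" "k < int n" "coprime k (int n)"
  shows "group.ord (GG n) ((k, False), False) = n"
proof -
  interpret group "GG n" using GG_group assms(1) .
  have c: "((k, False), False) \<in> carrier (GG n)" using assms by (simp add: GG_carrier)
  have key: "ord ((k, False), False) dvd m \<longleftrightarrow> n dvd m" for m
  proof -
    have "ord ((k, False), False) dvd m \<longleftrightarrow> ((k, False), False) [^]\<^bsub>GG n\<^esub> m = \<one>\<^bsub>GG n\<^esub>"
      using pow_eq_id c by blast
    also have "\<dots> \<longleftrightarrow> (k * int m) mod int n = 0" using GG_pow_rot assms by (simp add: GG_one)
    also have "\<dots> \<longleftrightarrow> int n dvd k * int m" by auto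
    also have "\<dots> \<longleftrightarrow> int n dvd int m" using assms(4)
      by (metis coprime_commute coprime_dvd_mult_right_iff)
    finally show ?thesis by simp
  qed
  show ?thesis using key[of n] key[of "ord ((k, False), False)"] dvd_antisym by auto
qed


lemma GG_subgroupI:
  assumes n: "n \<ge> 1" and sub: "K \<subseteq> carrier (GG n)" and one: "((0,False),False) \<in> K"
    and inv: "\<And>i r s. ((i, r), s) \<in> K \<Longrightarrow> ((if r then i else (- i) mod int n, r), s) \<in> K"
    and mult: "\<And>a b. a \<in> K \<Longrightarrow> b \<in> K \<Longrightarrow> (dih_mult n (fst a) (fst b), snd a \<noteq> snd b) \<in> K"
  shows "subgroup K (GG n)"
proof -
  interpret group "GG n" using GG_group n .
  show ?thesis
  proof (rule subgroupI)
    show "K \<noteq> {}" using one by blast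
    fix a assume a: "a \<in> K"
    obtain i r s where ae: "a = ((i, r), s)" by (metis prod.collapse)
    show "inv\<^bsub>GG n\<^esub> a \<in> K" using GG_inv[OF n, of i r s] a ae sub inv by auto
  next
    fix a b assume "a \<in> K" "b \<in> K" then show "a \<otimes>\<^bsub>GG n\<^esub> b \<in> K" using mult by (simp add: GG_mult)
  qed (use sub in auto)
qed

definition RR :: "nat \<Rightarrow> ((int \<times> bool) \<times> bool) set" where
  "RR n = {x \<in> carrier (GG n). \<not> snd (fst x)}"
definition SS :: "nat \<Rightarrow> ((int \<times> bool) \<times> bool) set" where
  "SS n = {x \<in> carrier (GG n). snd (fst x) = snd x}"
definition KK :: "nat \<Rightarrow> int \<Rightarrow> int \<Rightarrow> int \<Rightarrow> ((int \<times> bool) \<times> bool) set" where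
  "KK n m j t = {x \<in> carrier (GG n).
     m dvd (fst (fst x) - (if snd (fst x) then j else 0) - (if snd x then t else 0))}"

lemma RR_sub: "n \<ge> 1 \<Longrightarrow> subgroup (RR n) (GG n)"
  by (rule GG_subgroupI) (auto simp: RR_def GG_carrier dih_mult_def)

lemma SS_sub: "n \<ge> 1 \<Longrightarrow> subgroup (SS n) (GG n)"
  by (rule GG_subgroupI) (auto simp: SS_def GG_carrier dih_mult_def)

lemma modm: assumes "m dvd int n" shows "m dvd (x mod int n - y) \<longleftrightarrow> m dvd (x - y)"
proof -
  have "x mod int n - x = - (int n * (x div int n))" using div_mult_mod_eq[of x "int n"] by (simp add: algebra_simps)
  then have d: "m dvd (x mod int n - x)" using assms by simp
  have "x mod int n - y = (x mod int n - x) + (x - y)" by simp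
  then show ?thesis using d by (metis dvd_add_right_iff)
qed

lemma KK_sub: assumes n: "n \<ge> 1" and md: "m dvd int n" and mt: "m dvd 2 * t"
  shows "subgroup (KK n m j t) (GG n)"
proof (rule GG_subgroupI[OF n])
  fix i r s assume h: "((i, r), s) \<in> KK n m j t"
  show "((if r then i else (- i) mod int n, r), s) \<in> KK n m j t"
  proof (cases r)
    case True then show ?thesis using h by simp
  next
    case False
    then have "m dvd (i - (if s then t else 0))" using h by (simp add: KK_def)
    then have "m dvd (- i - (if s then t else 0))" using dvd_combo_inv mt by blast
    then have "m dvd ((- i) mod int n - (if s then t else 0))" using modm[OF md] by blast
    then show ?thesis using False n by (simp add: KK_def GG_carrier)
  qed
next
  fix a b assume ha: "a \<in> KK n m j t" and hb: "b \<in> KK n m j t"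
  obtain i r s where ae: "a = ((i, r), s)" by (metis prod.collapse)
  obtain i' r' s' where be: "b = ((i', r'), s')" by (metis prod.collapse)
  have A: "m dvd (i - (if r then j else 0) - (if s then t else 0))" using ha ae by (simp add: KK_def)
  have B: "m dvd (i' - (if r' then j else 0) - (if s' then t else 0))" using hb be by (simp add: KK_def)
  have "m dvd (i + (if r then - i' else i') - (if r \<noteq> r' then j else 0) - (if s \<noteq> s' then t else 0))"
    using dvd_combo_mult[OF A B mt] .
  then have "m dvd ((i + (if r then - i' else i')) mod int n - ((if r \<noteq> r' then j else 0) + (if s \<noteq> s' then t else 0)))"
    using modm[OF md] by (simp add: diff_diff_eq)
  moreover have c: "(dih_mult n (fst a) (fst b), snd a \<noteq> snd b) = ((((i + (if r then - i' else i')) mod int n), r \<noteq> r'), s \<noteq> s')"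
    by (simp add: ae be dih_mult_def)
  moreover have "((((i + (if r then - i' else i')) mod int n), r \<noteq> r'), s \<noteq> s') \<in> carrier (GG n)"
    using n by (simp add: GG_carrier)
  ultimately show "(dih_mult n (fst a) (fst b), snd a \<noteq> snd b) \<in> KK n m j t"
    unfolding KK_def by (simp only: c mem_Collect_eq fst_conv snd_conv diff_diff_eq simp_thms)
qed (use n in \<open>auto simp: KK_def GG_carrier\<close>)


definition phi :: "nat \<Rightarrow> int \<Rightarrow> int \<Rightarrow> int \<Rightarrow> (int \<times> bool) \<times> bool \<Rightarrow> (int \<times> bool) \<times> bool" where
  "phi n u M z x = (((u * fst (fst x) + (if snd (fst x) then M else 0) + (if snd x then z else 0)) mod int n,
     snd (fst x)), snd x)"

lemma eq_mod_range: fixes i i' :: int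
  assumes "0 \<le> i" "i < n" "0 \<le> i'" "i' < n" "n dvd (i - i')" shows "i = i'"
proof -
  have "i mod n = i' mod n" using assms(5) by (simp add: mod_eq_dvd_iff)
  then show ?thesis using assms by simp
qed

lemma phi_inj: assumes n: "n \<ge> 1" and uk: "(u * k) mod int n = 1 mod int n"
  shows "inj_on (phi n u M z) (carrier (GG n))"
proof (rule inj_onI)
  fix x y assume x: "x \<in> carrier (GG n)" and y: "y \<in> carrier (GG n)" and e: "phi n u M z x = phi n u M z y"
  obtain i r s where xe: "x = ((i, r), s)" by (metis prod.collapse)
  obtain i' r' s' where ye: "y = ((i', r'), s')" by (metis prod.collapse)
  have rs: "r' = r" "s' = s" using e xe ye by (auto simp: phi_def)
  define c where "c = (if r then M else 0) + (if s then z else 0)"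
  have "(u * i + c) mod int n = (u * i' + c) mod int n"
    using e xe ye rs by (simp add: phi_def c_def add.assoc)
  then have "int n dvd (u * i + c) - (u * i' + c)" by (simp add: mod_eq_dvd_iff)
  then have "int n dvd u * (i - i')" by (simp add: algebra_simps)
  then have d1: "int n dvd k * (u * (i - i'))" by simp
  have "int n dvd (u * k - 1)" using uk by (simp add: mod_eq_dvd_iff)
  then have "int n dvd (u * k - 1) * (i - i')" by simp
  with d1 have "int n dvd k * (u * (i - i')) - (u * k - 1) * (i - i')" by (rule dvd_diff)
  moreover have "k * (u * (i - i')) - (u * k - 1) * (i - i') = i - i'" by (simp add: algebra_simps)
  ultimately have "int n dvd (i - i')" by simp
  then have "i = i'" using x y xe ye eq_mod_range[of i "int n" i'] by (simp add: GG_carrier)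
  then show "x = y" using xe ye rs by simp
qed

lemma phi_hom: assumes n: "n \<ge> 1" and z: "int n dvd 2 * z"
  shows "phi n u M z \<in> hom (GG n) (GG n)"
proof (rule homI)
  fix x assume "x \<in> carrier (GG n)" then show "phi n u M z x \<in> carrier (GG n)"
    using n by (simp add: phi_def GG_carrier)
next
  fix x y assume x: "x \<in> carrier (GG n)" and y: "y \<in> carrier (GG n)"
  obtain i r s where xe: "x = ((i, r), s)" by (metis prod.collapse)
  obtain i' r' s' where ye: "y = ((i', r'), s')" by (metis prod.collapse)
  show "phi n u M z (x \<otimes>\<^bsub>GG n\<^esub> y) = phi n u M z x \<otimes>\<^bsub>GG n\<^esub> phi n u M z y"
    unfolding xe ye GG_mult phi_def dih_mult_def fst_conv snd_conv
    using phi_mod[OF z, of u i r i' r' M s s'] by simp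
qed

lemma phi_aut: assumes n: "n \<ge> 1" and uk: "(u * k) mod int n = 1 mod int n" and z: "int n dvd 2 * z"
  shows "phi n u M z \<in> Aut_pres (GG n) (HH n)"
proof -
  have fin: "finite (carrier (GG n))" by (simp add: GG_carrier)
  have inj: "inj_on (phi n u M z) (carrier (GG n))" using phi_inj[OF n uk] .
  have hom: "phi n u M z \<in> hom (GG n) (GG n)" using phi_hom[OF n z] .
  have sub: "phi n u M z ` carrier (GG n) \<subseteq> carrier (GG n)" using hom by (auto simp: hom_def)
  have "phi n u M z ` carrier (GG n) = carrier (GG n)" using endo_inj_surj[OF fin sub inj] .
  then have bij: "bij_betw (phi n u M z) (carrier (GG n)) (carrier (GG n))" using inj by (simp add: bij_betw_def)
  have HHc: "HH n \<subseteq> carrier (GG n)" by (auto simp: HH_def GG_carrier Dih_carrier)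
  have finH: "finite (HH n)" using fin HHc finite_subset by blast
  have subH: "phi n u M z ` HH n \<subseteq> HH n" using n by (auto simp: HH_def Dih_carrier phi_def)
  have "phi n u M z ` HH n = HH n" using endo_inj_surj[OF finH subH inj_on_subset[OF inj HHc]] .
  then show ?thesis using hom bij by (simp add: Aut_pres_def iso_def)
qed


lemma gen_pow: "x \<in> generate G X \<Longrightarrow> x [^]\<^bsub>G\<^esub> (m::nat) \<in> generate G X"
  by (induction m) (auto intro: generate.one generate.eng)

lemma std_adm: assumes n: "n \<ge> 3"
  shows "admissible_IIIb n 2 n
      [(dih_mult n dih_y (dih_x n), True), (dih_e, True), (dih_y, False), (dih_x n, False)]"
proof -
  have n1: "n \<ge> 1" using n by simp
  interpret group "GG n" using GG_group n1 .
  have one_mod: "1 mod int n = 1" using n by simp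
  have yx: "dih_mult n dih_y (dih_x n) = ((- 1) mod int n, True)"
    by (simp add: dih_mult_def dih_y_def dih_x_def one_mod)
  have dx: "dih_x n = (1, False)" by (simp add: dih_x_def one_mod)
  define X where "X = set [(((- 1) mod int n, True), True), ((0::int, False), True), ((0, True), False), ((1, False), False)]"
  have Xc: "X \<subseteq> carrier (GG n)" using n by (auto simp: X_def GG_carrier)
  have gen: "generate (GG n) X = carrier (GG n)"
  proof
    show "generate (GG n) X \<subseteq> carrier (GG n)" using generate_incl[OF Xc] .
  next
    show "carrier (GG n) \<subseteq> generate (GG n) X"
    proof
      fix w assume w: "w \<in> carrier (GG n)"
      obtain i r s where we: "w = ((i, r), s)" by (metis prod.collapse)
      have i: "0 \<le> i" "i < int n" using w we by (auto simp: GG_carrier)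
      have a: "((1, False), False) \<in> generate (GG n) X" by (rule generate.incl) (simp add: X_def)
      have "((1, False), False) [^]\<^bsub>GG n\<^esub> (nat i) \<in> generate (GG n) X" using gen_pow[OF a] .
      moreover have "((1::int, False), False) [^]\<^bsub>GG n\<^esub> (nat i) = ((i, False), False)"
        using GG_pow_rot[OF n1, of 1 "nat i"] n i by simp
      ultimately have g1: "((i, False), False) \<in> generate (GG n) X" by simp
      have yg: "((0, True), False) \<in> generate (GG n) X" by (rule generate.incl) (simp add: X_def)
      have zg: "((0, False), True) \<in> generate (GG n) X" by (rule generate.incl) (simp add: X_def)
      have g2: "((i, True), False) \<in> generate (GG n) X"
        using generate.eng[OF g1 yg] i by (simp add: GG_mult dih_mult_def)
      have g3: "((i, False), True) \<in> generate (GG n) X"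
        using generate.eng[OF g1 zg] i by (simp add: GG_mult dih_mult_def)
      have g4: "((i, True), True) \<in> generate (GG n) X"
        using generate.eng[OF g2 zg] i by (simp add: GG_mult dih_mult_def)
      show "w \<in> generate (GG n) X" using we g1 g2 g3 g4 by (cases r; cases s) auto
    qed
  qed
  have m1: "0 \<le> (- 1) mod int n" "(- 1) mod int n < int n" using n by simp_all
  have o1: "ord (((- 1) mod int n, True), True) = 2"
    by (rule GG_ord2_iff[OF n1]) (auto simp: GG_carrier GG_one GG_refl_sq n1 m1)
  have o2: "ord ((0::int, False), True) = 2"
    by (rule GG_ord2_iff[OF n1]) (use n in \<open>auto simp: GG_carrier GG_one GG_mult dih_mult_def\<close>)
  have o3: "ord ((0::int, True), False) = 2"
    by (rule GG_ord2_iff[OF n1]) (use n in \<open>auto simp: GG_carrier GG_one GG_refl_sq\<close>)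
  have o4: "ord ((1::int, False), False) = n"
    using GG_ord_rot[OF n1, of 1] n by simp
  show ?thesis unfolding admissible_IIIb_def yx dx dih_e_def dih_y_def
    using Xc gen o1 o2 o3 o4 n
    by (simp add: X_def GG_mult GG_one dih_mult_def mod_simps)
qed




lemma final_hmove:
  assumes n: "n \<ge> 1" and k: "0 \<le> k" "k < int n" and cop: "coprime k (int n)"
    and p2: "int n dvd 2 * p" and rel: "int n dvd (q - p - i3 + k)"
  shows "hmove (GG n) (HH n) [((q, True), True), ((p, False), True), ((i3, True), False), ((k, False), False)]
      [(dih_mult n dih_y (dih_x n), True), (dih_e, True), (dih_y, False), (dih_x n, False)]"
proof -
  obtain u v where uv: "u * k + v * int n = gcd k (int n)" using bezout_int by blast
  then have uv1: "u * k + v * int n = 1" using cop by (simp add: coprime_iff_gcd_eq_1)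
  have uk: "(u * k) mod int n = 1 mod int n"
  proof -
    have "u * k - 1 = int n * (- v)" using uv1 by (simp add: algebra_simps)
    then have "int n dvd (u * k - 1)" by (metis dvdI)
    then show ?thesis by (simp add: mod_eq_dvd_iff)
  qed
  have "2 * (- u * p) = (- u) * (2 * p)" by simp
  then have z: "int n dvd 2 * (- u * p)" using p2 by (metis dvd_mult)
  have aut: "phi n u (- u * i3) (- u * p) \<in> Aut_pres (GG n) (HH n)" using phi_aut[OF n uk z] .
  have e0: "(u * q + - u * i3 + - u * p) mod int n = (- (1 mod int n)) mod int n"
  proof -
    have d1: "int n dvd u * (q - p - i3 + k)" using rel by simp
    have d2: "int n dvd (u * k - 1)" using uk by (simp add: mod_eq_dvd_iff)
    have "int n dvd u * (q - p - i3 + k) - (u * k - 1)" using d1 d2 by (rule dvd_diff)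
    moreover have "u * (q - p - i3 + k) - (u * k - 1) = (u * q + - u * i3 + - u * p) - (- 1)"
      by (simp add: algebra_simps)
    ultimately have "(u * q + - u * i3 + - u * p) mod int n = (- 1) mod int n"
      by (simp add: mod_eq_dvd_iff)
    then show ?thesis unfolding mod_minus_eq .
  qed
  have m: "map (phi n u (- u * i3) (- u * p)) [((q, True), True), ((p, False), True), ((i3, True), False), ((k, False), False)]
      = [(dih_mult n dih_y (dih_x n), True), (dih_e, True), (dih_y, False), (dih_x n, False)]"
  proof -
    have p0: "phi n u (- u * i3) (- u * p) ((q, True), True) = (((u * q + - u * i3 + - u * p) mod int n, True), True)"
      unfolding phi_def by simp
    have p1: "phi n u (- u * i3) (- u * p) ((p, False), True) = ((0, False), True)"
      unfolding phi_def by simp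
    have p2: "phi n u (- u * i3) (- u * p) ((i3, True), False) = ((0, True), False)"
      unfolding phi_def by simp
    have p3: "phi n u (- u * i3) (- u * p) ((k, False), False) = (((u * k) mod int n, False), False)"
      unfolding phi_def by simp
    have yx: "dih_mult n dih_y (dih_x n) = ((- (1 mod int n)) mod int n, True)"
      by (simp add: dih_mult_def dih_y_def dih_x_def)
    show ?thesis unfolding list.map p0 p1 p2 p3 yx e0 uk by (simp add: dih_e_def dih_y_def dih_x_def)
  qed
  show ?thesis using hmove.aut[OF aut, of "[((q, True), True), ((p, False), True), ((i3, True), False), ((k, False), False)]"]
    unfolding m .
qed

lemma prod_first:
  assumes "((i1, r1), True) \<otimes>\<^bsub>GG n\<^esub> ((i2, r2), True) \<otimes>\<^bsub>GG n\<^esub> ((i3, r3), False) \<otimes>\<^bsub>GG n\<^esub> ((k, r4), False) = \<one>\<^bsub>GG n\<^esub>"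
  shows "(((r1 \<noteq> r2) \<noteq> r3) \<noteq> r4) = False"
    "((((i1 + (if r1 then - i2 else i2)) mod int n + (if r1 \<noteq> r2 then - i3 else i3)) mod int n
        + (if ((r1 \<noteq> r2) \<noteq> r3) then - k else k)) mod int n) = 0"
  using assms unfolding GG_mult GG_one dih_mult_def fst_conv snd_conv by (clarsimp split del: if_split)+

theorem lemma5p14:
  fixes n c3 c4 :: nat and v :: "((int \<times> bool) \<times> bool) list"
  assumes "n \<ge> 1"
    and "c3 \<le> c4" and "c3 \<ge> 2" and "c4 > 2"
    and "admissible_IIIb n c3 c4 v"
  shows "c3 = 2 \<and> c4 = n \<and>
    admissible_IIIb n 2 n
      [(dih_mult n dih_y (dih_x n), True), (dih_e, True), (dih_y, False), (dih_x n, False)] \<and>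
    hurwitz_equiv (GG n) (HH n) v
      [(dih_mult n dih_y (dih_x n), True), (dih_e, True), (dih_y, False), (dih_x n, False)]"
proof -
  have n1: "n \<ge> 1" by fact
  interpret group "GG n" using GG_group n1 .
  have adm: "length v = 4" "set v \<subseteq> carrier (GG n)"
     "v ! 0 \<otimes>\<^bsub>GG n\<^esub> v ! 1 \<otimes>\<^bsub>GG n\<^esub> v ! 2 \<otimes>\<^bsub>GG n\<^esub> v ! 3 = \<one>\<^bsub>GG n\<^esub>"
     "generate (GG n) (set v) = carrier (GG n)"
     "ord (v ! 0) = 2" "ord (v ! 1) = 2" "ord (v ! 2) = c3" "ord (v ! 3) = c4"
     "snd (v ! 0) = True" "snd (v ! 1) = True" "snd (v ! 2) = False" "snd (v ! 3) = False"
    using assms(5) unfolding admissible_IIIb_def by auto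
  obtain w0 w1 w2 w3 where ve: "v = [w0, w1, w2, w3]"
    using adm(1) by (auto simp: length_Suc_conv numeral_eq_Suc)
  have sn: "snd w0" "snd w1" "\<not> snd w2" "\<not> snd w3" using adm(9-12) ve
    by (simp_all add: numeral_2_eq_2 numeral_3_eq_3)
  obtain i1 r1 where w0: "w0 = ((i1, r1), True)" using sn(1) by (cases w0) auto
  obtain i2 r2 where w1: "w1 = ((i2, r2), True)" using sn(2) by (cases w1) auto
  obtain i3 r3 where w2: "w2 = ((i3, r3), False)" using sn(3) by (cases w2) auto
  obtain k r4 where w3: "w3 = ((k, r4), False)" using sn(4) by (cases w3) auto
  have car: "w0 \<in> carrier (GG n)" "w1 \<in> carrier (GG n)" "w2 \<in> carrier (GG n)" "w3 \<in> carrier (GG n)"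
    using adm(2) ve by auto
  have rng: "0 \<le> i1" "i1 < int n" "0 \<le> i2" "i2 < int n" "0 \<le> i3" "i3 < int n" "0 \<le> k" "k < int n"
    using car w0 w1 w2 w3 by (auto simp: GG_carrier)
  have ords: "ord w0 = 2" "ord w1 = 2" "ord w2 = c3" "ord w3 = c4"
    using adm(5-8) ve by (simp_all add: numeral_2_eq_2 numeral_3_eq_3)
  have prod: "w0 \<otimes>\<^bsub>GG n\<^esub> w1 \<otimes>\<^bsub>GG n\<^esub> w2 \<otimes>\<^bsub>GG n\<^esub> w3 = \<one>\<^bsub>GG n\<^esub>"
    using adm(3) ve by (simp add: numeral_2_eq_2 numeral_3_eq_3)
  have gen: "generate (GG n) {w0, w1, w2, w3} = carrier (GG n)" using adm(4) ve by simp
  note pf = prod_first[OF prod[unfolded w0 w1 w2 w3]]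
  have gen_sub: "carrier (GG n) \<subseteq> K" if "subgroup K (GG n)" "{w0, w1, w2, w3} \<subseteq> K" for K
    using generate_subgroup_incl[OF that(2,1)] gen by simp
  have r4: "\<not> r4"
  proof
    assume r4
    then have "ord w3 dvd 2" using GG_ord_dvd2[OF n1 car(4)] w3 GG_refl_sq by simp
    then have "c4 \<le> 2" using ords(4) by (simp add: dvd_imp_le)
    then show False using assms(4) by simp
  qed
  have r3: r3
  proof (rule ccontr)
    assume nr3: "\<not> r3"
    then have r12: "r1 = r2" using pf(1) r4 by auto
    have y: "((0, True), False) \<in> carrier (GG n)" using n1 by (simp add: GG_carrier)
    show False
    proof (cases r1)
      case False
      then have "{w0, w1, w2, w3} \<subseteq> RR n" using car r12 nr3 r4 w0 w1 w2 w3 by (auto simp: RR_def)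
      then have "carrier (GG n) \<subseteq> RR n" using gen_sub RR_sub[OF n1] by blast
      then show False using y by (auto simp: RR_def)
    next
      case True
      then have "{w0, w1, w2, w3} \<subseteq> SS n" using car r12 nr3 r4 w0 w1 w2 w3 by (auto simp: SS_def)
      then have "carrier (GG n) \<subseteq> SS n" using gen_sub SS_sub[OF n1] by blast
      then show False using y by (auto simp: SS_def)
    qed
  qed
  have c3: "c3 = 2"
  proof -
    have "ord w2 dvd 2" using GG_ord_dvd2[OF n1 car(3)] w2 GG_refl_sq r3 by simp
    then have "c3 \<le> 2" using ords(3) by (simp add: dvd_imp_le)
    then show ?thesis using assms(3) by simp
  qed
  have r12: "r1 \<noteq> r2" using pf(1) r3 r4 by auto
  have sq: "int n dvd 2 * i" if "w = ((i, False), True)" "w \<in> carrier (GG n)" "ord w = 2" for w i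
  proof -
    have "w \<otimes>\<^bsub>GG n\<^esub> w = \<one>\<^bsub>GG n\<^esub>" using GG_ord2_sq[OF n1 that(2,3)] .
    then have "(i + i) mod int n = 0" using that(1) by (simp add: GG_mult GG_one dih_mult_def)
    then have "int n dvd (i + i)" by (rule mod_0_imp_dvd)
    then show ?thesis by (simp only: mult_2)
  qed
  obtain p q where pq: "(w0 = ((q, True), True) \<and> w1 = ((p, False), True)) \<or> (w0 = ((p, False), True) \<and> w1 = ((q, True), True))"
    and pr: "0 \<le> p" "p < int n" and qr: "0 \<le> q" "q < int n"
    and p2: "int n dvd 2 * p" and rel: "int n dvd (q - p - i3 + k)"
  proof (cases r1)
    case True
    then have nr2: "\<not> r2" using r12 by simp
    have "((((i1 - i2) mod int n - i3) mod int n + k) mod int n) = 0"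
      using pf(2) True nr2 r3 r4 by simp
    then have "(i1 - i2 - i3 + k) mod int n = 0" by (simp add: mod_simps)
    then have "int n dvd (i1 - i2 - i3 + k)" by (rule mod_0_imp_dvd)
    moreover have "int n dvd 2 * i2" using sq[OF _ car(2) ords(2)] w1 nr2 by simp
    ultimately show ?thesis using that[of i1 i2] w0 w1 True nr2 rng by simp
  next
    case False
    then have r2: "r2" using r12 by simp
    have "((((i1 + i2) mod int n - i3) mod int n + k) mod int n) = 0"
      using pf(2) False r2 r3 r4 by simp
    then have "(i1 + i2 - i3 + k) mod int n = 0" by (simp add: mod_simps)
    then have d: "int n dvd (i1 + i2 - i3 + k)" by (rule mod_0_imp_dvd)
    moreover have d2: "int n dvd 2 * i1" using sq[OF _ car(1) ords(1)] w0 False by simp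
    ultimately have "int n dvd (i1 + i2 - i3 + k) - 2 * i1" by (rule dvd_diff)
    moreover have "(i1 + i2 - i3 + k) - 2 * i1 = i2 - i1 - i3 + k" by simp
    ultimately have "int n dvd (i2 - i1 - i3 + k)" by simp
    then show ?thesis using that[of i2 i1] w0 w1 False r2 rng d2 by simp
  qed
  have w2e: "w2 = ((i3, True), False)" using w2 r3 by simp
  have w3e: "w3 = ((k, False), False)" using w3 r4 by simp
  define g where "g = gcd k (int n)"
  have g1: "g = 1"
  proof (rule ccontr)
    assume gn1: "g \<noteq> 1"
    have gpos: "g > 0" using n1 unfolding g_def by simp
    have gn: "g dvd int n" "g dvd k" unfolding g_def by simp_all
    have g2p: "g dvd 2 * p" using gn(1) p2 by (rule dvd_trans)
    have "g dvd (q - p - i3 + k)" using gn(1) rel by (rule dvd_trans)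
    then have "g dvd (q - p - i3 + k) - k" using gn(2) by (rule dvd_diff)
    then have gq: "g dvd (q - i3 - p)" by (simp add: algebra_simps)
    have sub: "subgroup (KK n g i3 p) (GG n)" using KK_sub[OF n1 gn(1) g2p] .
    have "{w0, w1, w2, w3} \<subseteq> KK n g i3 p"
      using pq car gq gn(2) unfolding w2e w3e KK_def by auto
    then have inc: "carrier (GG n) \<subseteq> KK n g i3 p" using gen_sub sub by blast
    have "n \<noteq> 1" using gn1 unfolding g_def by auto
    then have "((1, False), False) \<in> carrier (GG n)" using n1 by (simp add: GG_carrier)
    then have "g dvd 1" using inc unfolding KK_def by auto
    then show False using gpos gn1 by simp
  qed
  have cop: "coprime k (int n)" using g1 unfolding g_def by (simp add: coprime_iff_gcd_eq_1)
  have c4: "c4 = n" using GG_ord_rot[OF n1 rng(7,8) cop] ords(4) w3e by simp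
  have n3: "n \<ge> 3" using c4 assms(4) by simp
  have fm: "hmove (GG n) (HH n) [((q, True), True), ((p, False), True), w2, w3]
      [(dih_mult n dih_y (dih_x n), True), (dih_e, True), (dih_y, False), (dih_x n, False)]"
    unfolding w2e w3e using final_hmove[OF n1 rng(7,8) cop p2 rel] .
  have eqv: "hurwitz_equiv (GG n) (HH n) v
      [(dih_mult n dih_y (dih_x n), True), (dih_e, True), (dih_y, False), (dih_x n, False)]"
  proof (cases "w0 = ((q, True), True) \<and> w1 = ((p, False), True)")
    case True
    then show ?thesis unfolding hurwitz_equiv_def ve using fm by auto
  next
    case False
    then have e0: "w0 = ((p, False), True)" and e1: "w1 = ((q, True), True)" using pq by auto
    have pc: "((p, False), True) \<in> carrier (GG n)" using pr by (simp add: GG_carrier)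
    have inv: "inv\<^bsub>GG n\<^esub> ((p, False), True) = (((- p) mod int n, False), True)"
      using GG_inv[OF n1 pc] by simp
    have a1: "(((p + q) mod int n + - ((- p) mod int n)) mod int n) = (p + q + p) mod int n"
    proof (rule mod_add_cong)
      show "(p + q) mod int n mod int n = (p + q) mod int n" by simp
      have "(- ((- p) mod int n)) mod int n = (- (- p)) mod int n" by (rule mod_minus_eq)
      then show "(- ((- p) mod int n)) mod int n = p mod int n" by simp
    qed
    have "int n dvd (p + q + p) - q" using p2 by (simp add: algebra_simps mult_2)
    then have "(p + q + p) mod int n = q mod int n" by (simp add: mod_eq_dvd_iff)
    also have "\<dots> = q" using qr by simp
    finally have a2: "(((p + q) mod int n + - ((- p) mod int n)) mod int n) = q" using a1 by simp
    have a3: "((p + q) mod int n - (- p) mod int n) mod int n = q" using a2 by simp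
    have bs: "braid_sigma (GG n) 0 v = [((q, True), True), ((p, False), True), w2, w3]"
      unfolding braid_sigma_def ve e0 e1
      by (simp add: GG_mult dih_mult_def a3 inv)
    have "hmove (GG n) (HH n) v (braid_sigma (GG n) 0 v)" by (rule hmove.sigma) (simp add: ve)
    then have "hmove (GG n) (HH n) v [((q, True), True), ((p, False), True), w2, w3]" unfolding bs .
    then show ?thesis unfolding hurwitz_equiv_def using fm
      by (meson converse_rtranclp_into_rtranclp r_into_rtranclp)
  qed
  show ?thesis using c3 c4 std_adm[OF n3] eqv by simp
qed


end
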